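(* Suppose $R=DV$ is obtained by the lazy reduction, and let $\omega*\sigma,\omega*\tau$ ($\sigma,\tau\in K$) be a persistence pair, $\operatorname{low}R[\omega*\tau]=\omega*\sigma$. Then every simplex with nonzero coefficient in $V[\omega*\tau]$ is a cone simplex or $\omega$ (no base simplex of $K$ occurs in $V[\omega*\tau]$). Consequently the chain $z=(\partial(V[\omega*\tau]\cap(\omega*K\setminus K)))\cap K$ equals $R[\omega*\tau]\cap K$, the restriction of $R[\omega*\tau]$ to base simplices.
   Context: Coefficients are in a field $\mathbb F$. Let $K$ be a finite $\Delta$-complex in which every simplex $\sigma$ carries an integer interval $T(\sigma)=[\min\sigma,\max\sigma]$ with $\min\sigma<\max\sigma$, such that whenever $\sigma$ is a proper face of $\tau$, $\min\sigma<\min\tau<\max\tau<\max\sigma$; assume the values $\min\sigma$ ($\sigma\in K$) are pairwise distinct and the values $\max\sigma$ are pairwise distinct. The cone $\omega*K$ consists of the simplices of $K$ ("base simplices"), a new vertex $\omega$, and simplices $\omega*\sigma$ for $\sigma\in K$ ("cone simplices"), with $\partial(\omega*\sigma)=\sigma-\omega*\partial\sigma$ (for a vertex $v$, $\partial(\omega*v)=v-\omega$). The cone filtration orders base simplices by increasing $\min$, then $\omega$, then the simplices $\omega*\sigma$ by decreasing $\max\sigma$. $D$ is the boundary matrix of $\omega*K$ with rows and columns in this order. For a nonzero column $c$, $\operatorname{low}c$ is its lowest nonzero entry's index. The lazy reduction is the standard column algorithm: start with $R=D$, $V=I$; process columns left to right, and while the current column $R[j]$ is nonzero and some earlier column $R[i]$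 has $\operatorname{low}R[i]=\operatorname{low}R[j]$, replace $R[j]\leftarrow R[j]-cR[i]$, $V[j]\leftarrow V[j]-cV[i]$ with $c$ cancelling the pivot. It yields $R=DV$ with $V$ invertible upper-triangular and $R$ reduced. For a chain $c$ and set of simplices $L$, $c\cap L$ is the restriction of $c$ to simplices in $L$. *)

theory Defs
  imports Main
begin

definition delta_complex :: "'s set \<Rightarrow> ('s \<Rightarrow> nat) \<Rightarrow> ('s \<Rightarrow> nat \<Rightarrow> 's) \<Rightarrow> bool" where
  "delta_complex K dim face \<longleftrightarrow>
     finite K \<and>
     (\<forall>s\<in>K. 0 < dim s \<longrightarrow> (\<forall>i\<le>dim s. face s i \<in> K \<and> dim (face s i) = dim s - 1)) \<and>
     (\<forall>s\<in>K. \<forall>i j. 1 < dim s \<and> i < j \<and> j \<le> dim s \<longrightarrow>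
                 face (face s j) i = face (face s i) (j - 1))"

definition is_facet :: "'s set \<Rightarrow> ('s \<Rightarrow> nat) \<Rightarrow> ('s \<Rightarrow> nat \<Rightarrow> 's) \<Rightarrow> 's \<Rightarrow> 's \<Rightarrow> bool" where
  "is_facet K dim face r s \<longleftrightarrow> s \<in> K \<and> 0 < dim s \<and> (\<exists>i\<le>dim s. r = face s i)"

definition proper_face :: "'s set \<Rightarrow> ('s \<Rightarrow> nat) \<Rightarrow> ('s \<Rightarrow> nat \<Rightarrow> 's) \<Rightarrow> 's \<Rightarrow> 's \<Rightarrow> bool" where
  "proper_face K dim face = tranclp (is_facet K dim face)"

datatype 's csimp = Base 's | Omega | Cone 's

definition cone_set :: "'s set \<Rightarrow> 's csimp set" where
  "cone_set K = Base ` K \<union> {Omega} \<union> Cone ` K"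

fun filt_less :: "('s \<Rightarrow> int) \<Rightarrow> ('s \<Rightarrow> int) \<Rightarrow> 's csimp \<Rightarrow> 's csimp \<Rightarrow> bool" where
  "filt_less mn mx (Base a) (Base b) = (mn a < mn b)"
| "filt_less mn mx (Base a) Omega = True"
| "filt_less mn mx (Base a) (Cone b) = True"
| "filt_less mn mx Omega (Cone b) = True"
| "filt_less mn mx (Cone a) (Cone b) = (mx b < mx a)"
| "filt_less mn mx _ _ = False"

definition cone_filtration :: "'s set \<Rightarrow> ('s \<Rightarrow> int) \<Rightarrow> ('s \<Rightarrow> int) \<Rightarrow> 's csimp list" where
  "cone_filtration K mn mx =
     (THE xs. set xs = cone_set K \<and> distinct xs \<and> sorted_wrt (filt_less mn mx) xs)"

definition ind :: "'a \<Rightarrow> 'a \<Rightarrow> 'f::field" where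
  "ind s t = (if t = s then 1 else 0)"

fun bdry :: "('s \<Rightarrow> nat) \<Rightarrow> ('s \<Rightarrow> nat \<Rightarrow> 's) \<Rightarrow> 's csimp \<Rightarrow> 's csimp \<Rightarrow> 'f::field" where
  "bdry dim face (Base s) =
     (if dim s = 0 then (\<lambda>_. 0)
      else (\<lambda>t. \<Sum>i\<in>{0..dim s}. (-1) ^ i * ind (Base (face s i)) t))"
| "bdry dim face Omega = (\<lambda>_. 0)"
| "bdry dim face (Cone s) =
     (if dim s = 0 then (\<lambda>t. ind (Base s) t - ind Omega t)
      else (\<lambda>t. ind (Base s) t - (\<Sum>i\<in>{0..dim s}. (-1) ^ i * ind (Cone (face s i)) t)))"

definition bd :: "'s set \<Rightarrow> ('s \<Rightarrow> nat) \<Rightarrow> ('s \<Rightarrow> nat \<Rightarrow> 's) \<Rightarrow> ('s csimp \<Rightarrow> 'f::field) \<Rightarrow> 's csimp \<Rightarrow> 'f" where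
  "bd K dim face c = (\<lambda>t. \<Sum>s\<in>cone_set K. c s * bdry dim face s t)"

definition restrict_chain :: "('a \<Rightarrow> 'f::field) \<Rightarrow> 'a set \<Rightarrow> 'a \<Rightarrow> 'f" where
  "restrict_chain c L = (\<lambda>s. if s \<in> L then c s else 0)"

text \<open>A matrix is a function j \<mapsto> column j, a column is a function i \<mapsto> entry in row i.\<close>

definition boundary_matrix :: "('s \<Rightarrow> nat) \<Rightarrow> ('s \<Rightarrow> nat \<Rightarrow> 's) \<Rightarrow> 's csimp list \<Rightarrow> nat \<Rightarrow> nat \<Rightarrow> 'f::field" where
  "boundary_matrix dim face F = (\<lambda>j i. if i < length F \<and> j < length F then bdry dim face (F ! j) (F ! i) else 0)"

definition id_cols :: "nat \<Rightarrow> nat \<Rightarrow> nat \<Rightarrow> 'f::field" where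
  "id_cols N = (\<lambda>j i. if i = j \<and> j < N then 1 else 0)"

definition low :: "(nat \<Rightarrow> 'f::field) \<Rightarrow> nat" where
  "low c = Max {i. c i \<noteq> 0}"

text \<open>States of the lazy column algorithm: (j, R, V), columns < j already processed.\<close>
inductive lazy_run :: "(nat \<Rightarrow> nat \<Rightarrow> 'f::field) \<Rightarrow> nat \<Rightarrow> nat \<Rightarrow> (nat \<Rightarrow> nat \<Rightarrow> 'f) \<Rightarrow> (nat \<Rightarrow> nat \<Rightarrow> 'f) \<Rightarrow> bool"
  for D :: "nat \<Rightarrow> nat \<Rightarrow> 'f::field" and N :: nat where
  init: "lazy_run D N 0 D (id_cols N)"
| reduce: "\<lbrakk> lazy_run D N j R V; j < N; R j \<noteq> (\<lambda>_. 0); i < j; R i \<noteq> (\<lambda>_. 0);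
             low (R i) = low (R j); c = R j (low (R j)) / R i (low (R i)) \<rbrakk>
           \<Longrightarrow> lazy_run D N j (R(j := (\<lambda>r. R j r - c * R i r))) (V(j := (\<lambda>r. V j r - c * V i r)))"
| advance: "\<lbrakk> lazy_run D N j R V; j < N;
              R j = (\<lambda>_. 0) \<or> \<not> (\<exists>i<j. R i \<noteq> (\<lambda>_. 0) \<and> low (R i) = low (R j)) \<rbrakk>
           \<Longrightarrow> lazy_run D N (Suc j) R V"

definition lazy_reduction :: "(nat \<Rightarrow> nat \<Rightarrow> 'f::field) \<Rightarrow> nat \<Rightarrow> (nat \<Rightarrow> nat \<Rightarrow> 'f) \<Rightarrow> (nat \<Rightarrow> nat \<Rightarrow> 'f) \<Rightarrow> bool" where
  "lazy_reduction D N R V \<longleftrightarrow> lazy_run D N N R V"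

definition col_chain :: "'s csimp list \<Rightarrow> (nat \<Rightarrow> 'f::field) \<Rightarrow> 's csimp \<Rightarrow> 'f" where
  "col_chain F c = (\<lambda>s. \<Sum>k<length F. if F ! k = s then c k else 0)"

end

theory Submission
  imports Defs "HOL-Library.Product_Lexorder"
begin

fun ckey :: "('s \<Rightarrow> int) \<Rightarrow> ('s \<Rightarrow> int) \<Rightarrow> 's csimp \<Rightarrow> int \<times> int" where
  "ckey mn mx (Base s) = (0, mn s)"
| "ckey mn mx Omega = (1, 0)"
| "ckey mn mx (Cone s) = (2, - mx s)"

lemma filt_less_key: "filt_less mn mx x y = (ckey mn mx x < ckey mn mx y)"
  by (cases x; cases y) auto

lemma key_inj:
  assumes "inj_on mn K" "inj_on mx K"
  shows "inj_on (ckey mn mx) (cone_set K)"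
proof
  fix x y assume "x \<in> cone_set K" "y \<in> cone_set K" "ckey mn mx x = ckey mn mx y"
  then show "x = y" using assms
    by (cases x; cases y) (auto simp: cone_set_def inj_on_def)
qed

lemma F_props:
  assumes "finite K" "inj_on mn K" "inj_on mx K"
  shows "set (cone_filtration K mn mx) = cone_set K \<and> distinct (cone_filtration K mn mx)
         \<and> sorted_wrt (filt_less mn mx) (cone_filtration K mn mx)"
proof -
  let ?S = "cone_set K" and ?k = "ckey mn mx"
  have fin: "finite ?S" using assms(1) by (simp add: cone_set_def)
  have inj: "inj_on ?k ?S" using key_inj assms(2,3) .
  have sw: "sorted_wrt (filt_less mn mx) xs \<longleftrightarrow> sorted_wrt (<) (map ?k xs)" for xs
  proof -
    have "filt_less mn mx = (\<lambda>x y. ?k x < ?k y)" by (intro ext) (simp add: filt_less_key)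
    then show ?thesis by (simp add: sorted_wrt_map)
  qed
  obtain ys where ys: "sorted_wrt (<) ys" "set ys = ?k ` ?S"
    using ex1_sorted_list_for_set_if_finite[of "?k ` ?S"] fin by auto
  define xs where "xs = map (the_inv_into ?S ?k) ys"
  have mk: "map ?k xs = ys" unfolding xs_def map_map
    by (rule map_idI) (use ys(2) inj in \<open>auto simp: f_the_inv_into_f\<close>)
  have sx: "set xs = ?S" unfolding xs_def using ys(2) inj
    by (auto simp: the_inv_into_f_f image_iff)
  have P: "set xs = ?S \<and> distinct xs \<and> sorted_wrt (filt_less mn mx) xs"
    using sx mk ys(1) sw strict_sorted_iff distinct_map by metis
  have U: "zs = xs" if "set zs = ?S \<and> distinct zs \<and> sorted_wrt (filt_less mn mx) zs" for zs
  proof -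
    have "map ?k zs = map ?k xs"
      using strict_sorted_equal[of "map ?k xs" "map ?k zs"] that P sw by simp
    then show ?thesis using inj that sx by (simp add: inj_on_map_eq_map)
  qed
  have "\<exists>!xs. set xs = ?S \<and> distinct xs \<and> sorted_wrt (filt_less mn mx) xs"
    using P U by blast
  from theI'[OF this] show ?thesis unfolding cone_filtration_def .
qed

lemma lazy_lin:
  assumes "lazy_run D N j R V" "\<forall>j r. (N \<le> j \<or> N \<le> r) \<longrightarrow> D j r = 0"
  shows "\<forall>j r. R j r = (\<Sum>k<N. V j k * D k r)"
  using assms(1)
proof induction
  case init
  show ?case
  proof (intro allI)
    fix j r
    show "D j r = (\<Sum>k<N. id_cols N j k * D k r)"
    proof (cases "j < N")
      case True
      have "(\<Sum>k<N. id_cols N j k * D k r) = (\<Sum>k<N. if k = j then D k r else 0)"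
        by (rule sum.cong) (auto simp: id_cols_def True)
      also have "\<dots> = D j r" using True by simp
      finally show ?thesis by simp
    next
      case False
      then show ?thesis using assms(2) by (simp add: id_cols_def)
    qed
  qed
next
  case (reduce j R V i c)
  show ?case
    using reduce.IH
    by (auto simp: sum_subtractf sum_distrib_left algebra_simps)
next
  case (advance j R V)
  then show ?case by simp
qed

lemma low_mem:
  assumes "c \<noteq> (\<lambda>_. 0)" "\<forall>r\<ge>N. c r = 0"
  shows "c (low c) \<noteq> 0 \<and> low c < N \<and> (\<forall>r. c r \<noteq> 0 \<longrightarrow> r \<le> low c)"
proof -
  have sub: "{i. c i \<noteq> 0} \<subseteq> {..<N}" using assms(2) by (auto simp: not_less[symmetric])
  then have fin: "finite {i. c i \<noteq> 0}" by (rule finite_subset) simp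
  have ne: "{i. c i \<noteq> 0} \<noteq> {}" using assms(1) by auto
  have "low c \<in> {i. c i \<noteq> 0}" unfolding low_def using Max_in[OF fin ne] .
  moreover have "\<forall>r. c r \<noteq> 0 \<longrightarrow> r \<le> low c" unfolding low_def using fin by auto
  ultimately show ?thesis using sub by auto
qed

lemma low_reduce:
  fixes x y :: "nat \<Rightarrow> 'f::field"
  assumes "x \<noteq> (\<lambda>_. 0)" "y \<noteq> (\<lambda>_. 0)" "\<forall>r\<ge>N. x r = 0" "\<forall>r\<ge>N. y r = 0"
    "low y = low x" "c = x (low x) / y (low y)" "(\<lambda>r. x r - c * y r) \<noteq> (\<lambda>_. 0)"
  shows "low (\<lambda>r. x r - c * y r) < low x"
proof -
  define z where "z = (\<lambda>r. x r - c * y r)"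
  have zs: "\<forall>r\<ge>N. z r = 0" using assms(3,4) by (simp add: z_def)
  from low_mem[OF assms(7)[folded z_def] zs] have lz: "z (low z) \<noteq> 0" by blast
  have lx: "\<forall>r. x r \<noteq> 0 \<longrightarrow> r \<le> low x" using low_mem[OF assms(1,3)] by blast
  have ly: "\<forall>r. y r \<noteq> 0 \<longrightarrow> r \<le> low x" "y (low x) \<noteq> 0"
    using low_mem[OF assms(2,4)] assms(5) by auto
  have "low z \<le> low x"
    using lz lx ly unfolding z_def by (metis mult_zero_right diff_zero)
  moreover have "z (low x) = 0" using ly(2) assms(5,6) by (simp add: z_def)
  ultimately have "low z < low x" using lz by (metis le_neq_implies_less)
  then show ?thesis by (simp add: z_def)
qed

lemma lazy_inv:
  assumes "lazy_run D N j R V" "\<forall>j r. (N \<le> j \<or> N \<le> r) \<longrightarrow> D j r = 0"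
    and mono: "\<forall>L' L. L' < L \<longrightarrow> L < N \<longrightarrow> P L' \<longrightarrow> P L"
    and ini: "\<forall>j. D j \<noteq> (\<lambda>_. 0) \<longrightarrow> P (low (D j)) \<longrightarrow> Q j"
  shows "\<forall>j. R j \<noteq> (\<lambda>_. 0) \<longrightarrow> P (low (R j)) \<longrightarrow> (\<forall>k. V j k \<noteq> 0 \<longrightarrow> Q k)"
  using assms(1)
proof induction
  case init
  then show ?case using ini by (auto simp: id_cols_def split: if_splits)
next
  case (reduce j R V i c)
  have lin: "\<forall>j r. R j r = (\<Sum>k<N. V j k * D k r)" using lazy_lin[OF reduce.hyps(1) assms(2)] .
  have supp: "\<forall>r\<ge>N. R j' r = 0" for j' using lin assms(2) by simp
  show ?case
  proof (intro allI impI)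
    fix j' k
    assume a: "(R(j := (\<lambda>r. R j r - c * R i r))) j' \<noteq> (\<lambda>_. 0)"
      "P (low ((R(j := (\<lambda>r. R j r - c * R i r))) j'))"
      "(V(j := (\<lambda>r. V j r - c * V i r))) j' k \<noteq> 0"
    show "Q k"
    proof (cases "j' = j")
      case False
      then show ?thesis using a reduce.IH by auto
    next
      case True
      have nz: "(\<lambda>r. R j r - c * R i r) \<noteq> (\<lambda>_. 0)" using a(1) True by simp
      have lt: "low (\<lambda>r. R j r - c * R i r) < low (R j)"
        by (rule low_reduce[OF reduce.hyps(3) reduce.hyps(5) supp supp reduce.hyps(6) reduce.hyps(7) nz])
      have "low (R j) < N" using low_mem[OF reduce.hyps(3) supp] by blast
      then have PL: "P (low (R j))" using mono lt a(2) True by auto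
      have "V j k \<noteq> 0 \<or> V i k \<noteq> 0" using a(3) True by auto
      then show ?thesis using reduce.IH reduce.hyps(3,5,6) PL by metis
    qed
  qed
next
  case (advance j R V)
  then show ?case by simp
qed

fun rk :: "'s csimp \<Rightarrow> nat" where
  "rk (Base _) = 0" | "rk Omega = 1" | "rk (Cone _) = 2"

lemma filt_rk: "filt_less mn mx x y \<Longrightarrow> rk x \<le> rk y"
  by (cases x; cases y) auto

theorem mainTheorem7:
  fixes K :: "'s set" and dim :: "'s \<Rightarrow> nat" and face :: "'s \<Rightarrow> nat \<Rightarrow> 's"
    and mn mx :: "'s \<Rightarrow> int" and R V :: "nat \<Rightarrow> nat \<Rightarrow> 'f::field"
    and \<sigma> \<tau> :: 's and a b :: nat
  assumes "delta_complex K dim face"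
    and "\<forall>s\<in>K. mn s < mx s"
    and "\<forall>s t. proper_face K dim face s t \<longrightarrow> mn s < mn t \<and> mn t < mx t \<and> mx t < mx s"
    and "inj_on mn K" and "inj_on mx K"
  defines "F \<equiv> cone_filtration K mn mx"
  assumes "lazy_reduction (boundary_matrix dim face F) (length F) R V"
    and "\<sigma> \<in> K" and "\<tau> \<in> K"
    and "a < length F" and "F ! a = Cone \<tau>"
    and "b < length F" and "F ! b = Cone \<sigma>"
    and "R a \<noteq> (\<lambda>_. 0)" and "low (R a) = b"
  shows "(\<forall>k<length F. V a k \<noteq> 0 \<longrightarrow> F ! k = Omega \<or> (\<exists>\<rho>\<in>K. F ! k = Cone \<rho>))
       \<and> restrict_chain
           (bd K dim face (restrict_chain (col_chain F (V a)) (cone_set K - Base ` K)))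
           (Base ` K)
         = restrict_chain (col_chain F (R a)) (Base ` K)"
proof -
  have finK: "finite K" using assms(1) by (simp add: delta_complex_def)
  have FP: "set F = cone_set K" "distinct F" "sorted_wrt (filt_less mn mx) F"
    using F_props[OF finK assms(4,5)] unfolding F_def by auto
  define N where "N = length F"
  define D :: "nat \<Rightarrow> nat \<Rightarrow> 'f" where "D = boundary_matrix dim face F"
  have run: "lazy_run D N N R V" using assms(7) by (simp add: lazy_reduction_def D_def N_def)
  have Dz: "\<forall>j r. (N \<le> j \<or> N \<le> r) \<longrightarrow> D j r = 0"
    by (auto simp: D_def boundary_matrix_def N_def)
  have rkmono: "rk (F ! k) \<le> rk (F ! l)" if "k < l" "l < N" for k l
    using FP(3) that filt_rk unfolding N_def by (metis sorted_wrt_nth_less)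
  define P where "P = (\<lambda>L. rk (F ! L) = 2)"
  define Q where "Q = (\<lambda>k. 1 \<le> rk (F ! k))"
  have mono: "\<forall>L' L. L' < L \<longrightarrow> L < N \<longrightarrow> P L' \<longrightarrow> P L"
  proof (intro allI impI)
    fix L' L assume "L' < L" "L < N" "P L'"
    then have "2 \<le> rk (F ! L)" using rkmono[of L' L] by (simp add: P_def)
    moreover have "rk (F ! L) \<le> 2" by (cases "F ! L") auto
    ultimately show "P L" by (simp add: P_def)
  qed
  have ini: "\<forall>j. D j \<noteq> (\<lambda>_. 0) \<longrightarrow> P (low (D j)) \<longrightarrow> Q j"
  proof (intro allI impI)
    fix j assume nz: "D j \<noteq> (\<lambda>_. 0)" and p: "P (low (D j))"
    have "\<forall>r\<ge>N. D j r = 0" using Dz by simp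
    from low_mem[OF nz this] have l: "D j (low (D j)) \<noteq> 0" by blast
    define L where "L = low (D j)"
    have jN: "j < N" "L < N" and bd0: "bdry dim face (F ! j) (F ! L) \<noteq> (0::'f)"
      using l by (auto simp: D_def boundary_matrix_def N_def L_def split: if_splits)
    obtain x where FL: "F ! L = Cone x" using p by (cases "F ! L") (auto simp: P_def L_def)
    show "Q j"
    proof (cases "F ! j")
      case (Base s)
      then have "bdry dim face (F ! j) (F ! L) = (0::'f)" using FL by (simp add: ind_def)
      then show ?thesis using bd0 by simp
    next
      case Omega
      then show ?thesis using bd0 by simp
    qed (simp add: Q_def)
  qed
  have inv: "\<forall>j. R j \<noteq> (\<lambda>_. 0) \<longrightarrow> P (low (R j)) \<longrightarrow> (\<forall>k. V j k \<noteq> 0 \<longrightarrow> Q k)"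
    using lazy_inv[OF run Dz mono ini] .
  have Pa: "P (low (R a))" using assms(13,15) by (simp add: P_def)
  have Va: "\<forall>k. V a k \<noteq> 0 \<longrightarrow> 1 \<le> rk (F ! k)" using inv assms(14) Pa by (simp add: Q_def)
  have part1: "\<forall>k<length F. V a k \<noteq> 0 \<longrightarrow> F ! k = Omega \<or> (\<exists>\<rho>\<in>K. F ! k = Cone \<rho>)"
  proof (intro allI impI)
    fix k assume k: "k < length F" "V a k \<noteq> 0"
    have mem: "F ! k \<in> cone_set K" using FP(1) k(1) nth_mem by metis
    show "F ! k = Omega \<or> (\<exists>\<rho>\<in>K. F ! k = Cone \<rho>)"
      using Va k mem by (cases "F ! k") (auto simp: cone_set_def)
  qed
  have lin: "\<forall>j r. R j r = (\<Sum>k<N. V j k * D k r)" using lazy_lin[OF run Dz] .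
  have cc: "col_chain F c (F ! m) = c m" if "m < N" for c :: "nat \<Rightarrow> 'f" and m
  proof -
    have "col_chain F c (F ! m) = (\<Sum>k<N. if k = m then c k else 0)"
      unfolding col_chain_def N_def[symmetric]
      by (rule sum.cong) (use that FP(2) in \<open>auto simp: N_def nth_eq_iff_index_eq\<close>)
    then show ?thesis using that by simp
  qed
  have setF: "cone_set K = (\<lambda>k. F ! k) ` {..<N}" using FP(1) by (auto simp: N_def set_conv_nth)
  have injF: "inj_on (\<lambda>k. F ! k) {..<N}" using FP(2) by (auto simp: N_def inj_on_def nth_eq_iff_index_eq)
  have part2: "restrict_chain
           (bd K dim face (restrict_chain (col_chain F (V a)) (cone_set K - Base ` K)))
           (Base ` K) t
         = restrict_chain (col_chain F (R a)) (Base ` K) t" for t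
  proof (cases "t \<in> Base ` K")
    case False
    then show ?thesis by (simp add: restrict_chain_def)
  next
    case True
    then have "t \<in> cone_set K" by (simp add: cone_set_def)
    then obtain m where m: "m < N" "t = F ! m" using setF by auto
    have "bd K dim face (restrict_chain (col_chain F (V a)) (cone_set K - Base ` K)) t
        = (\<Sum>s\<in>cone_set K. col_chain F (V a) s * bdry dim face s t)"
      unfolding bd_def
    proof (rule sum.cong[OF refl])
      fix s assume s: "s \<in> cone_set K"
      show "restrict_chain (col_chain F (V a)) (cone_set K - Base ` K) s * bdry dim face s t
          = col_chain F (V a) s * bdry dim face s t"
      proof (cases "s \<in> Base ` K")
        case False then show ?thesis using s by (simp add: restrict_chain_def)
      next
        case True
        obtain n where n: "n < N" "s = F ! n" using s setF by auto
        have "V a n = 0" using Va n True by fastforce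
        then show ?thesis using cc n by (simp add: restrict_chain_def)
      qed
    qed
    also have "\<dots> = (\<Sum>k<N. col_chain F (V a) (F ! k) * bdry dim face (F ! k) t)"
      unfolding setF by (subst sum.reindex[OF injF]) simp
    also have "\<dots> = (\<Sum>k<N. V a k * D k m)"
      by (rule sum.cong[OF refl]) (use m cc in \<open>auto simp: D_def boundary_matrix_def N_def\<close>)
    also have "\<dots> = col_chain F (R a) t" using lin cc m by simp
    finally show ?thesis using True by (simp add: restrict_chain_def)
  qed
  show ?thesis using part1 part2 by blast
qed

end
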